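(* Let $\mathfrak A$ and $\mathcal A$ be Banach algebras with $\mathcal A$ a Banach $\mathfrak A$-module with compatible actions, where $\mathfrak A$ acts trivially on $\mathcal A$ from the left, and suppose $\mathcal A/\mathcal J$ has a right bounded approximate identity. Then $\mathcal A/\mathcal J$ (as a Banach $\mathfrak A$-module) is module pseudo-amenable if and only if it is pseudo-amenable.
   Context: Compatible actions: $\alpha\cdot(ab)=(\alpha\cdot a)b$, $(ab)\cdot\alpha=a(b\cdot\alpha)$. $\mathfrak A$ acts trivially from the left if there is a continuous linear functional $f$ on $\mathfrak A$ with $\alpha\cdot a=f(\alpha)a$ for all $\alpha\in\mathfrak A,a\in\mathcal A$. $\mathcal J$ is the closed ideal of $\mathcal A$ generated by $\{(a\cdot\alpha)b-a(\alpha\cdot b):a,b\in\mathcal A,\alpha\in\mathfrak A\}$. For a Banach algebra $\mathcal C$ that is a Banach $\mathfrak A$-module with compatible actions: $\mathcal I_{\mathcal C}$ is the closed span of $\{c\cdot\alpha\otimes d-c\otimes\alpha\cdot d\}$ in $\mathcal C\widehat\otimes\mathcal C$, $\mathcal C\widehat\otimes_{\mathfrak A}\mathcal C=(\mathcal C\widehat\otimes\mathcal C)/\mathcal I_{\mathcal C}$, $\mathcal J_{\mathcal C}$ is the closed ideal of $\mathcal C$ generated by $\{(c\cdot\alpha)d-c(\alpha\cdot d)\}$, $\widetilde\omega_{\mathcal C}(c\otimes d+\mathcal I_{\mathcal C})=cd+\mathcal J_{\mathcal C}$; $\mathcal C$ is module pseudo-amenable if there is a net $(\widetilde u_j)\subseteq\mathcal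 C\widehat\otimes_{\mathfrak A}\mathcal C$ with $(\widetilde\omega_{\mathcal C}(\widetilde u_j))$ an approximate identity of $\mathcal C/\mathcal J_{\mathcal C}$ and $c\cdot\widetilde u_j-\widetilde u_j\cdot c\to0$ for all $c\in\mathcal C$. A Banach algebra $\mathcal C$ is pseudo-amenable if there is a net $(u_j)\subseteq\mathcal C\widehat\otimes\mathcal C$ with $c\cdot u_j-u_j\cdot c\to0$ and $\omega_{\mathcal C}(u_j)c\to c$ for all $c\in\mathcal C$, where $\omega_{\mathcal C}(c\otimes d)=cd$. *)

theory Defs
  imports "HOL-Analysis.Analysis"
begin

class cbanach_algebra = real_normed_algebra + banach +
  fixes cscale :: "complex \<Rightarrow> 'a \<Rightarrow> 'a"
  assumes cscale_add_right: "cscale c (x + y) = cscale c x + cscale c y"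
    and cscale_add_left: "cscale (b + c) x = cscale b x + cscale c x"
    and cscale_cscale: "cscale b (cscale c x) = cscale (b * c) x"
    and cscale_one: "cscale 1 x = x"
    and cscale_of_real: "cscale (complex_of_real r) x = scaleR r x"
    and norm_cscale: "norm (cscale c x) = cmod c * norm x"
    and mult_cscale_left: "cscale c x * y = cscale c (x * y)"
    and mult_cscale_right: "x * cscale c y = cscale c (x * y)"

definition c_linear :: "('a::cbanach_algebra \<Rightarrow> 'b::cbanach_algebra) \<Rightarrow> bool" where
  "c_linear f \<longleftrightarrow> (\<forall>x y. f (x + y) = f x + f y) \<and> (\<forall>c x. f (cscale c x) = cscale c (f x))"

definition c_functional :: "('a::cbanach_algebra \<Rightarrow> complex) \<Rightarrow> bool" where
  "c_functional f \<longleftrightarrow> (\<forall>x y. f (x + y) = f x + f y) \<and> (\<forall>c x. f (cscale c x) = c * f x)"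

definition banach_module ::
  "('m::cbanach_algebra \<Rightarrow> 'a::cbanach_algebra \<Rightarrow> 'a) \<Rightarrow> ('a \<Rightarrow> 'm \<Rightarrow> 'a) \<Rightarrow> bool" where
  "banach_module la ra \<longleftrightarrow>
     (\<forall>\<alpha>. c_linear (la \<alpha>)) \<and> (\<forall>a. c_linear (\<lambda>\<alpha>. la \<alpha> a)) \<and>
     (\<forall>\<alpha>. c_linear (\<lambda>a. ra a \<alpha>)) \<and> (\<forall>a. c_linear (ra a)) \<and>
     (\<exists>K. \<forall>\<alpha> a. norm (la \<alpha> a) \<le> K * norm \<alpha> * norm a) \<and>
     (\<exists>K. \<forall>a \<alpha>. norm (ra a \<alpha>) \<le> K * norm a * norm \<alpha>) \<and>
     (\<forall>\<alpha> \<beta> a. la (\<alpha> * \<beta>) a = la \<alpha> (la \<beta> a)) \<and>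
     (\<forall>a \<alpha> \<beta>. ra a (\<alpha> * \<beta>) = ra (ra a \<alpha>) \<beta>) \<and>
     (\<forall>\<alpha> a \<beta>. ra (la \<alpha> a) \<beta> = la \<alpha> (ra a \<beta>))"

definition compatible_actions ::
  "('m::cbanach_algebra \<Rightarrow> 'a::cbanach_algebra \<Rightarrow> 'a) \<Rightarrow> ('a \<Rightarrow> 'm \<Rightarrow> 'a) \<Rightarrow> bool" where
  "compatible_actions la ra \<longleftrightarrow>
     (\<forall>\<alpha> a b. la \<alpha> (a * b) = la \<alpha> a * b) \<and> (\<forall>a b \<alpha>. ra (a * b) \<alpha> = a * ra b \<alpha>)"

definition acts_trivially_left :: "('m::cbanach_algebra \<Rightarrow> 'a::cbanach_algebra \<Rightarrow> 'a) \<Rightarrow> bool" where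
  "acts_trivially_left la \<longleftrightarrow>
     (\<exists>f. c_functional f \<and> (\<exists>K. \<forall>\<alpha>. cmod (f \<alpha>) \<le> K * norm \<alpha>) \<and>
          (\<forall>\<alpha> a. la \<alpha> a = cscale (f \<alpha>) a))"

definition closed_ideal :: "'a::cbanach_algebra set \<Rightarrow> bool" where
  "closed_ideal I \<longleftrightarrow> 0 \<in> I \<and> (\<forall>x\<in>I. \<forall>y\<in>I. x + y \<in> I) \<and> (\<forall>c. \<forall>x\<in>I. cscale c x \<in> I) \<and>
     (\<forall>a. \<forall>x\<in>I. a * x \<in> I \<and> x * a \<in> I) \<and> closed I"

definition gen_closed_ideal :: "'a::cbanach_algebra set \<Rightarrow> 'a set" where
  "gen_closed_ideal S = \<Inter>{I. closed_ideal I \<and> S \<subseteq> I}"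

definition module_ideal ::
  "('m::cbanach_algebra \<Rightarrow> 'a::cbanach_algebra \<Rightarrow> 'a) \<Rightarrow> ('a \<Rightarrow> 'm \<Rightarrow> 'a) \<Rightarrow> 'a set" where
  "module_ideal la ra = gen_closed_ideal {ra a \<alpha> * b - a * la \<alpha> b | a b \<alpha>. True}"

text \<open>q :: 'a => 'c presents 'c as the quotient Banach algebra 'a / J:
 q is a surjective complex-linear algebra homomorphism and the norm on 'c is
 the quotient norm. (Then ker q = J for closed J, and q induces an isometric
 algebra isomorphism 'a/J = 'c.)\<close>
definition quotient_by :: "'a::cbanach_algebra set \<Rightarrow> ('a \<Rightarrow> 'c::cbanach_algebra) \<Rightarrow> bool" where
  "quotient_by J q \<longleftrightarrow> c_linear q \<and> (\<forall>a b. q (a * b) = q a * q b) \<and> surj q \<and>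
     (\<forall>a. norm (q a) = infdist a J)"

definition has_right_bai :: "'c::cbanach_algebra itself \<Rightarrow> bool" where
  "has_right_bai _ \<longleftrightarrow> (\<exists>F :: 'c filter. F \<noteq> bot \<and> (\<exists>K. \<forall>\<^sub>F e in F. norm e \<le> K) \<and>
      (\<forall>x. ((\<lambda>e. x * e) \<longlongrightarrow> x) F))"

text \<open>An element of C \<otimes> C is represented by a series sum a_n (x) b_n with
 sum ||a_n|| ||b_n|| < infinity; it is identified with its action on bounded
 bilinear forms (the dual of the projective tensor product).\<close>

definition bbil :: "('c::cbanach_algebra \<Rightarrow> 'c \<Rightarrow> complex) \<Rightarrow> bool" where
  "bbil \<phi> \<longleftrightarrow> (\<forall>y. c_functional (\<lambda>x. \<phi> x y)) \<and> (\<forall>x. c_functional (\<phi> x)) \<and>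
     (\<exists>K. \<forall>x y. cmod (\<phi> x y) \<le> K * norm x * norm y)"

definition trep :: "(nat \<Rightarrow> 'c::cbanach_algebra \<times> 'c) \<Rightarrow> bool" where
  "trep u \<longleftrightarrow> summable (\<lambda>n. norm (fst (u n)) * norm (snd (u n)))"

type_synonym 'c tensor = "('c \<Rightarrow> 'c \<Rightarrow> complex) \<Rightarrow> complex"

definition tau :: "(nat \<Rightarrow> 'c::cbanach_algebra \<times> 'c) \<Rightarrow> 'c tensor" where
  "tau u = (\<lambda>\<phi>. if bbil \<phi> then (\<Sum>n. \<phi> (fst (u n)) (snd (u n))) else 0)"

definition tensor_set :: "'c::cbanach_algebra tensor set" where
  "tensor_set = {tau u | u. trep u}"

definition projnorm :: "'c::cbanach_algebra tensor \<Rightarrow> real" where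
  "projnorm t = Inf {(\<Sum>n. norm (fst (u n)) * norm (snd (u n))) | u. trep u \<and> tau u = t}"

definition tsingle :: "'c::cbanach_algebra \<Rightarrow> 'c \<Rightarrow> nat \<Rightarrow> 'c \<times> 'c" where
  "tsingle x y = (\<lambda>n. if n = 0 then (x, y) else (0, 0))"

definition tlmul :: "'c::cbanach_algebra \<Rightarrow> (nat \<Rightarrow> 'c \<times> 'c) \<Rightarrow> nat \<Rightarrow> 'c \<times> 'c" where
  "tlmul c u = (\<lambda>n. (c * fst (u n), snd (u n)))"

definition trmul :: "(nat \<Rightarrow> 'c::cbanach_algebra \<times> 'c) \<Rightarrow> 'c \<Rightarrow> nat \<Rightarrow> 'c \<times> 'c" where
  "trmul u c = (\<lambda>n. (fst (u n), snd (u n) * c))"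

definition tomega :: "(nat \<Rightarrow> 'c::cbanach_algebra \<times> 'c) \<Rightarrow> 'c" where
  "tomega u = (\<Sum>n. fst (u n) * snd (u n))"

definition tdiff :: "'c tensor \<Rightarrow> 'c tensor \<Rightarrow> 'c tensor" where
  "tdiff s t = (\<lambda>\<phi>. s \<phi> - t \<phi>)"

definition closed_tsubspace :: "'c::cbanach_algebra tensor set \<Rightarrow> bool" where
  "closed_tsubspace M \<longleftrightarrow> M \<subseteq> tensor_set \<and> (\<lambda>\<phi>. 0) \<in> M \<and> (\<forall>x\<in>M. \<forall>y\<in>M. (\<lambda>\<phi>. x \<phi> + y \<phi>) \<in> M) \<and>
     (\<forall>c. \<forall>x\<in>M. (\<lambda>\<phi>. c * x \<phi>) \<in> M) \<and>
     (\<forall>t\<in>tensor_set. (\<forall>\<epsilon>>0. \<exists>m\<in>M. projnorm (tdiff t m) < \<epsilon>) \<longrightarrow> t \<in> M)"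

definition closed_tspan :: "'c::cbanach_algebra tensor set \<Rightarrow> 'c tensor set" where
  "closed_tspan S = \<Inter>{M. closed_tsubspace M \<and> S \<subseteq> M}"

definition tqnorm :: "'c::cbanach_algebra tensor set \<Rightarrow> 'c tensor \<Rightarrow> real" where
  "tqnorm I t = Inf {projnorm (tdiff t s) | s. s \<in> I}"

text \<open>Nets are rendered as proper filters on the space of representatives
 (a net (u_j) corresponds to its image filter).\<close>

definition pseudo_amenable :: "'c::cbanach_algebra itself \<Rightarrow> bool" where
  "pseudo_amenable _ \<longleftrightarrow>
     (\<exists>F :: (nat \<Rightarrow> 'c \<times> 'c) filter. F \<noteq> bot \<and> (\<forall>\<^sub>F u in F. trep u) \<and>
        (\<forall>c. ((\<lambda>u. projnorm (tdiff (tau (tlmul c u)) (tau (trmul u c)))) \<longlongrightarrow> 0) F) \<and>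
        (\<forall>c. ((\<lambda>u. tomega u * c) \<longlongrightarrow> c) F))"

definition module_pseudo_amenable ::
  "('m::cbanach_algebra \<Rightarrow> 'c::cbanach_algebra \<Rightarrow> 'c) \<Rightarrow> ('c \<Rightarrow> 'm \<Rightarrow> 'c) \<Rightarrow> bool" where
  "module_pseudo_amenable la ra \<longleftrightarrow>
     (let JC = module_ideal la ra;
          IC = closed_tspan {tdiff (tau (tsingle (ra c \<alpha>) d)) (tau (tsingle c (la \<alpha> d))) | c d \<alpha>. True}
      in \<exists>F :: (nat \<Rightarrow> 'c \<times> 'c) filter. F \<noteq> bot \<and> (\<forall>\<^sub>F u in F. trep u) \<and>
          (\<forall>x. ((\<lambda>u. infdist (tomega u * x - x) JC) \<longlongrightarrow> 0) F) \<and>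
          (\<forall>x. ((\<lambda>u. infdist (x * tomega u - x) JC) \<longlongrightarrow> 0) F) \<and>
          (\<forall>c. ((\<lambda>u. tqnorm IC (tdiff (tau (tlmul c u)) (tau (trmul u c)))) \<longlongrightarrow> 0) F))"

end

theory Submission
  imports Defs
begin

definition lgraph :: "('a::real_normed_vector \<times> real) set \<Rightarrow> bool" where
 "lgraph G \<longleftrightarrow> (\<forall>x a b. (x,a)\<in>G \<longrightarrow> (x,b)\<in>G \<longrightarrow> a = b) \<and>
   (\<forall>x y a b. (x,a)\<in>G \<longrightarrow> (y,b)\<in>G \<longrightarrow> (x+y, a+b) \<in> G) \<and>
   (\<forall>x a c. (x,a)\<in>G \<longrightarrow> (c *\<^sub>R x, c*a) \<in> G) \<and>
   (\<forall>x a. (x,a)\<in>G \<longrightarrow> a \<le> norm x)"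

lemma lgraph_D:
  assumes "lgraph G"
  shows lgraph_sv: "\<And>x a b. (x,a)\<in>G \<Longrightarrow> (x,b)\<in>G \<Longrightarrow> a = b"
    and lgraph_ad: "\<And>x y a b. (x,a)\<in>G \<Longrightarrow> (y,b)\<in>G \<Longrightarrow> (x+y, a+b) \<in> G"
    and lgraph_sc: "\<And>x a c. (x,a)\<in>G \<Longrightarrow> (c *\<^sub>R x, c*a) \<in> G"
    and lgraph_dm: "\<And>x a. (x,a)\<in>G \<Longrightarrow> a \<le> norm x"
  using assms unfolding lgraph_def by blast+

lemma lgraph_extend:
  fixes G :: "('a::real_normed_vector \<times> real) set"
  assumes G: "lgraph G" and G0: "(0,0) \<in> G" and x1: "x1 \<notin> fst ` G"
  shows "\<exists>G'. lgraph G' \<and> G \<subseteq> G' \<and> G' \<noteq> G"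
proof -
  have sv: "\<And>x a b. (x,a)\<in>G \<Longrightarrow> (x,b)\<in>G \<Longrightarrow> a = b"
    and ad: "\<And>x y a b. (x,a)\<in>G \<Longrightarrow> (y,b)\<in>G \<Longrightarrow> (x+y, a+b) \<in> G"
    and sc: "\<And>x a c. (x,a)\<in>G \<Longrightarrow> (c *\<^sub>R x, c*a) \<in> G"
    and dm: "\<And>x a. (x,a)\<in>G \<Longrightarrow> a \<le> norm x"
    using G unfolding lgraph_def by blast+
  define L where "L = {a - norm (d - x1) | d a. (d,a)\<in>G}"
  have key: "a - norm (d - x1) \<le> norm (e + x1) - b" if "(d,a)\<in>G" "(e,b)\<in>G" for d a e b
  proof -
    have "a + b \<le> norm (d + e)" using dm[OF ad[OF that]] .
    also have "d + e = (d - x1) + (e + x1)" by simp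
    also have "norm \<dots> \<le> norm (d - x1) + norm (e + x1)" by (rule norm_triangle_ineq)
    finally show ?thesis by simp
  qed
  define \<xi> where "\<xi> = Sup L"
  have Lne: "L \<noteq> {}" using G0 unfolding L_def by blast
  have Lbdd: "bdd_above L" unfolding L_def bdd_above_def using key[OF _ G0] by fastforce
  have xi1: "a - norm (d - x1) \<le> \<xi>" if "(d,a)\<in>G" for d a
    unfolding \<xi>_def by (rule cSup_upper[OF _ Lbdd]) (use that L_def in blast)
  have xi2: "\<xi> \<le> norm (e + x1) - b" if "(e,b)\<in>G" for e b
    unfolding \<xi>_def by (rule cSup_least[OF Lne]) (use key that L_def in blast)
  define G' where "G' = {(d + t *\<^sub>R x1, a + t*\<xi>) | d a t. (d,a)\<in>G}"
  have "lgraph G'"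
    unfolding lgraph_def
  proof (intro conjI allI impI)
    fix x a b assume "(x,a) \<in> G'" "(x,b) \<in> G'"
    then obtain d1 a1 t1 d2 a2 t2 where 1: "(d1,a1)\<in>G" "x = d1 + t1 *\<^sub>R x1" "a = a1 + t1*\<xi>"
      and 2: "(d2,a2)\<in>G" "x = d2 + t2 *\<^sub>R x1" "b = a2 + t2*\<xi>"
      unfolding G'_def by blast
    have "t1 = t2"
    proof (rule ccontr)
      assume ne: "t1 \<noteq> t2"
      have "(d2 + (-1) *\<^sub>R d1, a2 + (-1)*a1) \<in> G" by (rule ad[OF 2(1) sc[OF 1(1)]])
      from sc[OF this, of "1/(t1 - t2)"]
      have "((1/(t1 - t2)) *\<^sub>R (d2 + (-1) *\<^sub>R d1), (1/(t1 - t2)) * (a2 + (-1)*a1)) \<in> G" .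
      moreover have "(1/(t1 - t2)) *\<^sub>R (d2 + (-1) *\<^sub>R d1) = x1"
      proof -
        have "d2 - d1 = (t1 - t2) *\<^sub>R x1" using 1(2) 2(2) by (simp add: algebra_simps)
        then show ?thesis using ne by (simp add: divide_simps)
      qed
      ultimately have "x1 \<in> fst ` G" by (metis fst_conv image_eqI)
      with x1 show False by blast
    qed
    then have "d1 = d2" using 1(2) 2(2) by simp
    then have "a1 = a2" using sv 1(1) 2(1) by blast
    then show "a = b" using 1(3) 2(3) \<open>t1 = t2\<close> by simp
  next
    fix x y a b assume "(x,a) \<in> G'" "(y,b) \<in> G'"
    then obtain d1 a1 t1 d2 a2 t2 where 1: "(d1,a1)\<in>G" "x = d1 + t1 *\<^sub>R x1" "a = a1 + t1*\<xi>"
      and 2: "(d2,a2)\<in>G" "y = d2 + t2 *\<^sub>R x1" "b = a2 + t2*\<xi>"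
      unfolding G'_def by blast
    have "(x + y, a + b) = ((d1+d2) + (t1+t2) *\<^sub>R x1, (a1+a2) + (t1+t2)*\<xi>)"
      using 1 2 by (simp add: algebra_simps)
    then show "(x + y, a + b) \<in> G'" unfolding G'_def using ad[OF 1(1) 2(1)] by blast
  next
    fix x a c assume "(x,a) \<in> G'"
    then obtain d1 a1 t1 where 1: "(d1,a1)\<in>G" "x = d1 + t1 *\<^sub>R x1" "a = a1 + t1*\<xi>"
      unfolding G'_def by blast
    have "(c *\<^sub>R x, c * a) = (c *\<^sub>R d1 + (c*t1) *\<^sub>R x1, c*a1 + (c*t1)*\<xi>)"
      using 1 by (simp add: algebra_simps)
    then show "(c *\<^sub>R x, c * a) \<in> G'" unfolding G'_def using sc[OF 1(1)] by blast
  next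
    fix x a assume "(x,a) \<in> G'"
    then obtain d a1 t where 1: "(d,a1)\<in>G" "x = d + t *\<^sub>R x1" "a = a1 + t*\<xi>"
      unfolding G'_def by blast
    consider "t = 0" | "t > 0" | "t < 0" by linarith
    then show "a \<le> norm x"
    proof cases
      case 1 then show ?thesis using \<open>(d,a1)\<in>G\<close> dm \<open>x = _\<close> \<open>a = _\<close> by simp
    next
      case 2
      have "\<xi> \<le> norm ((1/t) *\<^sub>R d + x1) - (1/t)*a1" by (rule xi2[OF sc[OF \<open>(d,a1)\<in>G\<close>]])
      then have "t * \<xi> \<le> t * (norm ((1/t) *\<^sub>R d + x1) - (1/t)*a1)" using 2
        by (intro mult_left_mono) auto
      also have "\<dots> = t * norm ((1/t) *\<^sub>R d + x1) - a1" using 2 by (simp add: algebra_simps)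
      also have "t * norm ((1/t) *\<^sub>R d + x1) = norm (t *\<^sub>R ((1/t) *\<^sub>R d + x1))" using 2 by simp
      also have "t *\<^sub>R ((1/t) *\<^sub>R d + x1) = x" using 2 1 by (simp add: algebra_simps)
      finally show ?thesis using 1 by simp
    next
      case 3
      define s where "s = -t"
      have s: "s > 0" using 3 s_def by simp
      have "(1/s)*a1 - norm ((1/s) *\<^sub>R d - x1) \<le> \<xi>" by (rule xi1[OF sc[OF \<open>(d,a1)\<in>G\<close>]])
      then have "s * ((1/s)*a1 - norm ((1/s) *\<^sub>R d - x1)) \<le> s * \<xi>" using s
        by (intro mult_left_mono) auto
      then have "a1 - s * norm ((1/s) *\<^sub>R d - x1) \<le> s * \<xi>" using s
        by (simp add: algebra_simps)
      also have "s * norm ((1/s) *\<^sub>R d - x1) = norm (s *\<^sub>R ((1/s) *\<^sub>R d - x1))" using s by simp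
      also have "s *\<^sub>R ((1/s) *\<^sub>R d - x1) = x" using s 1 s_def by (simp add: algebra_simps)
      finally show ?thesis using 1 s_def by simp
    qed
  qed
  moreover have "G \<subseteq> G'"
  proof
    fix p assume "p \<in> G"
    then obtain d a where "p = (d,a)" "(d,a)\<in>G" by (cases p) auto
    moreover have "p = (d + 0 *\<^sub>R x1, a + 0*\<xi>)" using \<open>p = (d,a)\<close> by simp
    ultimately show "p \<in> G'" unfolding G'_def by blast
  qed
  moreover have "G' \<noteq> G"
  proof -
    have "(x1, \<xi>) = (0 + 1 *\<^sub>R x1, 0 + 1*\<xi>)" by simp
    then have "(x1, \<xi>) \<in> G'" unfolding G'_def using G0 by blast
    then show ?thesis using x1 by (metis fst_conv image_eqI)
  qed
  ultimately show ?thesis by (intro exI[of _ G']) simp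
qed

lemma hahn_banach_norm:
  fixes x0 :: "'a::real_normed_vector"
  shows "\<exists>h. (\<forall>x y. h (x+y) = h x + h y) \<and> (\<forall>c x. h (c *\<^sub>R x) = c * h x) \<and>
             (\<forall>x. \<bar>h x\<bar> \<le> norm x) \<and> h x0 = norm x0"
proof -
  define G0 where "G0 = {(t *\<^sub>R x0, t * norm x0) | t. True}"
  have lg0: "lgraph G0"
    unfolding lgraph_def G0_def
  proof (intro conjI allI impI)
    fix x a b assume "(x, a) \<in> {(t *\<^sub>R x0, t * norm x0) |t. True}" "(x, b) \<in> {(t *\<^sub>R x0, t * norm x0) |t. True}"
    then obtain t1 t2 where "x = t1 *\<^sub>R x0" "a = t1 * norm x0" "x = t2 *\<^sub>R x0" "b = t2 * norm x0" by blast
    then show "a = b" by (cases "x0 = 0") auto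
  next
    fix x y a b assume "(x, a) \<in> {(t *\<^sub>R x0, t * norm x0) |t. True}" "(y, b) \<in> {(t *\<^sub>R x0, t * norm x0) |t. True}"
    then obtain t1 t2 where "x = t1 *\<^sub>R x0" "a = t1 * norm x0" "y = t2 *\<^sub>R x0" "b = t2 * norm x0" by blast
    then show "(x + y, a + b) \<in> {(t *\<^sub>R x0, t * norm x0) |t. True}"
      by (auto intro!: exI[of _ "t1+t2"] simp: algebra_simps)
  next
    fix x a c assume "(x, a) \<in> {(t *\<^sub>R x0, t * norm x0) |t. True}"
    then obtain t1 where "x = t1 *\<^sub>R x0" "a = t1 * norm x0" by blast
    then show "(c *\<^sub>R x, c * a) \<in> {(t *\<^sub>R x0, t * norm x0) |t. True}"
      by (auto intro!: exI[of _ "c*t1"] simp: algebra_simps)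
  next
    fix x a assume "(x, a) \<in> {(t *\<^sub>R x0, t * norm x0) |t. True}"
    then obtain t1 where "x = t1 *\<^sub>R x0" "a = t1 * norm x0" by blast
    then show "a \<le> norm x" by (simp add: mult_right_mono)
  qed
  define A where "A = {G. lgraph G \<and> G0 \<subseteq> G}"
  have "\<exists>M\<in>A. \<forall>X\<in>A. M \<subseteq> X \<longrightarrow> X = M"
  proof (rule Zorn_Lemma2, intro ballI)
    fix C assume C: "C \<in> chains A"
    show "\<exists>U\<in>A. \<forall>X\<in>C. X \<subseteq> U"
    proof (cases "C = {}")
      case True then show ?thesis using lg0 A_def by auto
    next
      case False
      have CA: "C \<subseteq> A" using C by (simp add: chains_def)
      have ch: "\<And>X Y. X \<in> C \<Longrightarrow> Y \<in> C \<Longrightarrow> X \<subseteq> Y \<or> Y \<subseteq> X"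
        using C by (auto simp: chains_def chain_subset_def)
      have lgC: "\<And>X. X \<in> C \<Longrightarrow> lgraph X" using CA A_def by blast
      have "lgraph (\<Union>C)"
        unfolding lgraph_def
      proof (intro conjI allI impI)
        fix x a b assume "(x,a) \<in> \<Union>C" "(x,b) \<in> \<Union>C"
        then obtain X Y where "X\<in>C" "Y\<in>C" "(x,a)\<in>X" "(x,b)\<in>Y" by blast
        then show "a = b" using ch[of X Y] lgC lgraph_sv by blast
      next
        fix x y a b assume "(x,a) \<in> \<Union>C" "(y,b) \<in> \<Union>C"
        then obtain X Y where XY: "X\<in>C" "Y\<in>C" "(x,a)\<in>X" "(y,b)\<in>Y" by blast
        show "(x+y,a+b) \<in> \<Union>C"
        proof (cases "X \<subseteq> Y")
          case True then show ?thesis using XY lgC[of Y] lgraph_ad by blast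
        next
          case False then have "Y \<subseteq> X" using ch XY by blast
          then show ?thesis using XY lgC[of X] lgraph_ad by blast
        qed
      next
        fix x a c assume "(x,a) \<in> \<Union>C"
        then obtain X where "X\<in>C" "(x,a)\<in>X" by blast
        then show "(c *\<^sub>R x, c*a) \<in> \<Union>C" using lgC lgraph_sc by blast
      next
        fix x a assume "(x,a) \<in> \<Union>C"
        then obtain X where "X\<in>C" "(x,a)\<in>X" by blast
        then show "a \<le> norm x" using lgC lgraph_dm by blast
      qed
      moreover have "G0 \<subseteq> \<Union>C" using False CA A_def by blast
      ultimately show ?thesis unfolding A_def by blast
    qed
  qed
  then obtain M where MA: "M \<in> A" and Mmax: "\<And>X. X \<in> A \<Longrightarrow> M \<subseteq> X \<Longrightarrow> X = M" by blast
  have lgM: "lgraph M" and G0M: "G0 \<subseteq> M" using MA A_def by auto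
  have z: "(0,0) \<in> M" using G0M unfolding G0_def by (auto intro!: exI[of _ 0])
  have dom: "\<And>x. x \<in> fst ` M"
  proof (rule ccontr)
    fix x assume "x \<notin> fst ` M"
    from lgraph_extend[OF lgM z this] obtain G' where "lgraph G'" "M \<subseteq> G'" "G' \<noteq> M" by blast
    with Mmax[of G'] G0M A_def show False by blast
  qed
  have sv: "\<And>x a b. (x,a)\<in>M \<Longrightarrow> (x,b)\<in>M \<Longrightarrow> a = b"
    and ad: "\<And>x y a b. (x,a)\<in>M \<Longrightarrow> (y,b)\<in>M \<Longrightarrow> (x+y, a+b) \<in> M"
    and sc: "\<And>x a c. (x,a)\<in>M \<Longrightarrow> (c *\<^sub>R x, c*a) \<in> M"
    and dm: "\<And>x a. (x,a)\<in>M \<Longrightarrow> a \<le> norm x"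
    using lgM unfolding lgraph_def by blast+
  define h where "h x = (THE a. (x,a) \<in> M)" for x
  have hM: "(x, h x) \<in> M" for x
  proof -
    obtain a where "(x,a) \<in> M" using dom[of x] by force
    then have "\<exists>!a. (x,a)\<in>M" using sv by blast
    then show ?thesis unfolding h_def by (rule theI')
  qed
  have hv: "(x,a) \<in> M \<Longrightarrow> h x = a" for x a using sv hM by blast
  show ?thesis
  proof (intro exI[of _ h] conjI allI)
    fix x y show "h (x+y) = h x + h y" using hv ad hM by blast
  next
    fix c x show "h (c *\<^sub>R x) = c * h x" using hv sc hM by blast
  next
    fix x
    have "h x \<le> norm x" using dm hM by blast
    moreover have "(-1) * h x \<le> norm ((-1) *\<^sub>R x)" using dm sc hM by blast
    ultimately show "\<bar>h x\<bar> \<le> norm x" by simp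
  next
    have "(1 *\<^sub>R x0, 1 * norm x0) \<in> M" using G0M G0_def by blast
    then show "h x0 = norm x0" using hv by simp
  qed
qed


lemma add_hom_diff:
  fixes f :: "'a::ab_group_add \<Rightarrow> 'b::ab_group_add"
  assumes "\<forall>x y. f (x+y) = f x + f y"
  shows "f (x - y) = f x - f y"
proof -
  have "f (x - y) + f y = f x" using assms[rule_format, of "x-y" y] by simp
  then show ?thesis by (simp add: eq_diff_eq)
qed

lemma add_hom_zero:
  fixes f :: "'a::ab_group_add \<Rightarrow> 'b::ab_group_add"
  assumes "\<forall>x y. f (x+y) = f x + f y"
  shows "f 0 = 0"
  using add_hom_diff[OF assms, of 0 0] by simp

lemma add_hom_minus:
  fixes f :: "'a::ab_group_add \<Rightarrow> 'b::ab_group_add"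
  assumes "\<forall>x y. f (x+y) = f x + f y"
  shows "f (- x) = - f x"
  using add_hom_diff[OF assms, of 0 x] add_hom_zero[OF assms] by simp

lemma cscale_zero_right[simp]: "cscale c (0::'a::cbanach_algebra) = 0"
  using norm_cscale[of c "0::'a"] by simp

lemma cscale_add_hom: "\<forall>x y. cscale c (x + y) = cscale c x + cscale c (y::'a::cbanach_algebra)"
  by (simp add: cscale_add_right)

lemma cscale_diff_right: "cscale c (x - y) = cscale c x - cscale c (y::'a::cbanach_algebra)"
  by (rule add_hom_diff[OF cscale_add_hom])

lemma cscale_scaleR: "cscale c (r *\<^sub>R x) = r *\<^sub>R cscale c (x::'a::cbanach_algebra)"
proof -
  have "cscale c (r *\<^sub>R x) = cscale c (cscale (complex_of_real r) x)" by (simp add: cscale_of_real)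
  also have "\<dots> = cscale (complex_of_real r) (cscale c x)" by (simp add: cscale_cscale mult.commute)
  finally show ?thesis by (simp add: cscale_of_real)
qed

lemma cscale_ii: "cscale \<i> (cscale \<i> x) = - (x::'a::cbanach_algebra)"
proof -
  have "cscale \<i> (cscale \<i> x) = cscale (complex_of_real (-1)) x" by (simp add: cscale_cscale)
  also have "\<dots> = (-1) *\<^sub>R x" by (rule cscale_of_real)
  finally show ?thesis by simp
qed

lemma cscale_decomp: "cscale c x = Re c *\<^sub>R x + Im c *\<^sub>R cscale \<i> (x::'a::cbanach_algebra)"
proof -
  have "cscale c x = cscale (complex_of_real (Re c) + \<i> * complex_of_real (Im c)) x"
    using complex_eq[of c] by simp
  also have "\<dots> = cscale (complex_of_real (Re c)) x + cscale \<i> (cscale (complex_of_real (Im c)) x)"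
    by (simp add: cscale_add_left cscale_cscale)
  finally show ?thesis by (simp add: cscale_of_real cscale_scaleR)
qed

lemma bounded_linear_cscale: "bounded_linear (cscale c :: 'a::cbanach_algebra \<Rightarrow> 'a)"
  by (rule bounded_linear_intro[of _ "cmod c"]) (auto simp: cscale_add_right cscale_scaleR norm_cscale mult.commute)

lemma complex_functional_exists:
  fixes y :: "'a::cbanach_algebra"
  shows "\<exists>g. c_functional g \<and> bounded_linear g \<and> (\<forall>x. cmod (g x) \<le> 2 * norm x) \<and> Re (g y) = norm y"
proof -
  obtain h :: "'a \<Rightarrow> real" where ha: "\<And>x y. h (x+y) = h x + h y" and hs: "\<And>c x. h (c *\<^sub>R x) = c * h x"
    and hb: "\<And>x. \<bar>h x\<bar> \<le> norm x" and hy: "h y = norm y"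
    using hahn_banach_norm[of y] by blast
  have hm: "h (- x) = - h x" for x using hs[of "-1" x] by simp
  define g where "g x = complex_of_real (h x) - \<i> * complex_of_real (h (cscale \<i> x))" for x
  have ga: "g (x + y) = g x + g y" for x y by (simp add: g_def ha cscale_add_right algebra_simps)
  have gs: "g (r *\<^sub>R x) = r *\<^sub>R g x" for r x
    by (simp add: g_def hs cscale_scaleR scaleR_conv_of_real algebra_simps)
  have gi: "g (cscale \<i> x) = \<i> * g x" for x
    by (simp add: g_def cscale_ii hm algebra_simps)
  have gc: "g (cscale c x) = c * g x" for c x
  proof -
    have "g (cscale c x) = Re c *\<^sub>R g x + Im c *\<^sub>R (\<i> * g x)"
      by (subst cscale_decomp) (simp only: ga gs gi)
    also have "\<dots> = (complex_of_real (Re c) + \<i> * complex_of_real (Im c)) * g x"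
      by (simp add: scaleR_conv_of_real algebra_simps)
    also have "\<dots> = c * g x" using complex_eq[of c] by simp
    finally show ?thesis .
  qed
  have gb: "cmod (g x) \<le> 2 * norm x" for x
  proof -
    have "cmod (g x) \<le> cmod (complex_of_real (h x)) + cmod (\<i> * complex_of_real (h (cscale \<i> x)))"
      unfolding g_def by (rule norm_triangle_ineq4)
    also have "\<dots> = \<bar>h x\<bar> + \<bar>h (cscale \<i> x)\<bar>" by (simp add: norm_mult)
    also have "\<dots> \<le> norm x + norm (cscale \<i> x)" using hb by (intro add_mono) auto
    also have "\<dots> = 2 * norm x" by (simp add: norm_cscale)
    finally show ?thesis .
  qed
  have "bounded_linear g"
    by (rule bounded_linear_intro[of _ 2]) (use ga gs gb in \<open>auto simp: mult.commute\<close>)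
  moreover have "c_functional g" unfolding c_functional_def using ga gc by auto
  moreover have "Re (g y) = norm y" by (simp add: g_def hy)
  ultimately show ?thesis using gb by blast
qed

lemma bbil_props:
  assumes "bbil \<phi>"
  shows bbil_zero1: "\<phi> 0 y = 0" and bbil_zero2: "\<phi> x 0 = 0" and bbil_minus1: "\<phi> (- x) y = - \<phi> x y"
    and bbil_sc1: "\<phi> (cscale c x) y = c * \<phi> x y" and bbil_sc2: "\<phi> x (cscale c y) = c * \<phi> x y"
proof -
  have a1: "\<forall>x z. \<phi> (x + z) y = \<phi> x y + \<phi> z y" and s1: "\<And>c x. \<phi> (cscale c x) y = c * \<phi> x y"
    using assms unfolding bbil_def c_functional_def by auto
  have a2: "\<forall>y z. \<phi> x (y + z) = \<phi> x y + \<phi> x z" and s2: "\<And>c y. \<phi> x (cscale c y) = c * \<phi> x y"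
    using assms unfolding bbil_def c_functional_def by auto
  show "\<phi> 0 y = 0" using add_hom_zero[OF a1] .
  show "\<phi> x 0 = 0" using add_hom_zero[OF a2] .
  show "\<phi> (- x) y = - \<phi> x y" using add_hom_minus[OF a1] .
  show "\<phi> (cscale c x) y = c * \<phi> x y" by (rule s1)
  show "\<phi> x (cscale c y) = c * \<phi> x y" by (rule s2)
qed

lemma bbil_K:
  assumes "bbil \<phi>"
  obtains K where "K \<ge> 0" "\<And>x y. cmod (\<phi> x y) \<le> K * (norm x * norm y)"
proof -
  obtain K where K: "\<And>x y. cmod (\<phi> x y) \<le> K * norm x * norm y" using assms unfolding bbil_def by blast
  have "cmod (\<phi> x y) \<le> \<bar>K\<bar> * (norm x * norm y)" for x y
    using K[of x y] by (smt (verit) mult.assoc mult_right_mono norm_ge_zero zero_le_mult_iff)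
  then show ?thesis using that[of "\<bar>K\<bar>"] by simp
qed

lemma trep_nonneg_summable:
  assumes "trep u"
  shows "summable (\<lambda>n. norm (fst (u n)) * norm (snd (u n)))"
  using assms unfolding trep_def .

lemma bbil_summable:
  assumes "bbil \<phi>" "trep u"
  shows "summable (\<lambda>n. cmod (\<phi> (fst (u n)) (snd (u n))))"
    and "summable (\<lambda>n. \<phi> (fst (u n)) (snd (u n)))"
    and "\<exists>K\<ge>0. cmod (\<Sum>n. \<phi> (fst (u n)) (snd (u n))) \<le> K * (\<Sum>n. norm (fst (u n)) * norm (snd (u n)))"
proof -
  obtain K where K0: "K \<ge> 0" and K: "\<And>x y. cmod (\<phi> x y) \<le> K * (norm x * norm y)"
    using bbil_K[OF assms(1)] by blast
  have s: "summable (\<lambda>n. K * (norm (fst (u n)) * norm (snd (u n))))"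
    using summable_mult[OF assms(2)[unfolded trep_def]] .
  show s1: "summable (\<lambda>n. cmod (\<phi> (fst (u n)) (snd (u n))))"
    by (rule summable_comparison_test'[OF s]) (simp add: K)
  show s2: "summable (\<lambda>n. \<phi> (fst (u n)) (snd (u n)))" by (rule summable_norm_cancel[OF s1])
  have "cmod (\<Sum>n. \<phi> (fst (u n)) (snd (u n))) \<le> (\<Sum>n. cmod (\<phi> (fst (u n)) (snd (u n))))"
    by (rule summable_norm[OF s1])
  also have "\<dots> \<le> (\<Sum>n. K * (norm (fst (u n)) * norm (snd (u n))))"
    by (rule suminf_le[OF _ s1 s]) (simp add: K)
  also have "\<dots> = K * (\<Sum>n. norm (fst (u n)) * norm (snd (u n)))"
    by (rule suminf_mult[OF assms(2)[unfolded trep_def]])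
  finally show "\<exists>K\<ge>0. cmod (\<Sum>n. \<phi> (fst (u n)) (snd (u n))) \<le> K * (\<Sum>n. norm (fst (u n)) * norm (snd (u n)))"
    using K0 by blast
qed

lemma trep_prod_summable:
  assumes "trep (u :: nat \<Rightarrow> 'c::cbanach_algebra \<times> 'c)"
  shows "summable (\<lambda>n. norm (fst (u n) * snd (u n)))" "summable (\<lambda>n. fst (u n) * snd (u n))"
    and "norm (tomega u) \<le> (\<Sum>n. norm (fst (u n)) * norm (snd (u n)))"
proof -
  show s1: "summable (\<lambda>n. norm (fst (u n) * snd (u n)))"
    by (rule summable_comparison_test'[OF assms[unfolded trep_def]]) (simp add: norm_mult_ineq)
  show "summable (\<lambda>n. fst (u n) * snd (u n))" by (rule summable_norm_cancel[OF s1])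
  have "norm (tomega u) \<le> (\<Sum>n. norm (fst (u n) * snd (u n)))"
    unfolding tomega_def by (rule summable_norm[OF s1])
  also have "\<dots> \<le> (\<Sum>n. norm (fst (u n)) * norm (snd (u n)))"
    by (rule suminf_le[OF _ s1 assms[unfolded trep_def]]) (simp add: norm_mult_ineq)
  finally show "norm (tomega u) \<le> (\<Sum>n. norm (fst (u n)) * norm (snd (u n)))" .
qed

definition ilv :: "(nat \<Rightarrow> 'a) \<Rightarrow> (nat \<Rightarrow> 'a) \<Rightarrow> nat \<Rightarrow> 'a" where
  "ilv f g n = (if even n then f (n div 2) else g (n div 2))"

lemma ilv_sum: "sum (ilv f g) {..<n} = sum f {..<(n+1) div 2} + sum g {..<n div 2}"
  for f g :: "nat \<Rightarrow> 'a::comm_monoid_add"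
proof (induction n)
  case 0 then show ?case by simp
next
  case (Suc n)
  have e: "sum (ilv f g) {..<Suc n} = sum (ilv f g) {..<n} + ilv f g n" by (rule sum.lessThan_Suc)
  show ?case
  proof (cases "even n")
    case True
    then have 1: "(Suc n + 1) div 2 = Suc (n div 2)" "Suc n div 2 = n div 2" "(n+1) div 2 = n div 2"
      by presburger+
    have "ilv f g n = f (n div 2)" using True by (simp add: ilv_def)
    then show ?thesis unfolding e Suc.IH 1 sum.lessThan_Suc by (simp add: ac_simps)
  next
    case False
    then have 1: "(Suc n + 1) div 2 = (n+1) div 2" "Suc n div 2 = Suc (n div 2)" by presburger+
    have "ilv f g n = g (n div 2)" using False by (simp add: ilv_def)
    then show ?thesis unfolding e Suc.IH 1 sum.lessThan_Suc by (simp add: ac_simps)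
  qed
qed

lemma ilv_sums:
  fixes f g :: "nat \<Rightarrow> 'a::real_normed_vector"
  assumes "f sums a" "g sums b"
  shows "ilv f g sums (a + b)"
proof -
  have h1: "filterlim (\<lambda>n::nat. (n+1) div 2) at_top sequentially"
    unfolding filterlim_at_top eventually_sequentially
  proof
    fix Z :: nat show "\<exists>N. \<forall>n\<ge>N. Z \<le> (n + 1) div 2" by (rule exI[of _ "2*Z"]) presburger
  qed
  have h2: "filterlim (\<lambda>n::nat. n div 2) at_top sequentially"
    unfolding filterlim_at_top eventually_sequentially
  proof
    fix Z :: nat show "\<exists>N. \<forall>n\<ge>N. Z \<le> n div 2" by (rule exI[of _ "2*Z"]) presburger
  qed
  have t1: "(\<lambda>n. sum f {..<(n+1) div 2}) \<longlonglongrightarrow> a"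
    using filterlim_compose[OF assms(1)[unfolded sums_def] h1] .
  have t2: "(\<lambda>n. sum g {..<n div 2}) \<longlonglongrightarrow> b"
    using filterlim_compose[OF assms(2)[unfolded sums_def] h2] .
  show ?thesis unfolding sums_def ilv_sum by (rule tendsto_add[OF t1 t2])
qed


lemma tdiff_exists:
  fixes v w :: "nat \<Rightarrow> 'c::cbanach_algebra \<times> 'c"
  assumes v: "trep v" and w: "trep w"
  shows "\<exists>z. trep z \<and> tau z = tdiff (tau v) (tau w)"
proof -
  define w' where "w' = (\<lambda>n. (- fst (w n), snd (w n)))"
  define z where "z = ilv v w'"
  have nz: "(\<lambda>n. norm (fst (z n)) * norm (snd (z n))) = ilv (\<lambda>n. norm (fst (v n)) * norm (snd (v n))) (\<lambda>n. norm (fst (w n)) * norm (snd (w n)))"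
    by (auto simp: z_def w'_def ilv_def fun_eq_iff)
  have "trep z" unfolding trep_def nz
    using ilv_sums[OF summable_sums[OF v[unfolded trep_def]] summable_sums[OF w[unfolded trep_def]]] by (rule sums_summable)
  moreover have "tau z = tdiff (tau v) (tau w)"
  proof
    fix \<phi> :: "'c \<Rightarrow> 'c \<Rightarrow> complex"
    show "tau z \<phi> = tdiff (tau v) (tau w) \<phi>"
    proof (cases "bbil \<phi>")
      case False then show ?thesis by (simp add: tau_def tdiff_def)
    next
      case True
      have e: "(\<lambda>n. \<phi> (fst (z n)) (snd (z n))) = ilv (\<lambda>n. \<phi> (fst (v n)) (snd (v n))) (\<lambda>n. - \<phi> (fst (w n)) (snd (w n)))"
        by (auto simp: z_def w'_def ilv_def fun_eq_iff bbil_minus1[OF True])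
      have "(\<lambda>n. \<phi> (fst (z n)) (snd (z n))) sums ((\<Sum>n. \<phi> (fst (v n)) (snd (v n))) + - (\<Sum>n. \<phi> (fst (w n)) (snd (w n))))"
        unfolding e by (intro ilv_sums summable_sums sums_minus bbil_summable(2)[OF True] v w)
      then show ?thesis using True by (simp add: tau_def tdiff_def sums_iff)
    qed
  qed
  ultimately show ?thesis by blast
qed

lemma bbil_tau_bound:
  assumes "bbil \<phi>" "K \<ge> 0" "\<And>x y. cmod (\<phi> x y) \<le> K * (norm x * norm y)" "trep u"
  shows "cmod (tau u \<phi>) \<le> K * (\<Sum>n. norm (fst (u n)) * norm (snd (u n)))"
proof -
  have s: "summable (\<lambda>n. K * (norm (fst (u n)) * norm (snd (u n))))"
    using summable_mult[OF assms(4)[unfolded trep_def]] .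
  have s1: "summable (\<lambda>n. cmod (\<phi> (fst (u n)) (snd (u n))))"
    by (rule summable_comparison_test'[OF s]) (simp add: assms(3))
  have "cmod (tau u \<phi>) = cmod (\<Sum>n. \<phi> (fst (u n)) (snd (u n)))" using assms(1) by (simp add: tau_def)
  also have "\<dots> \<le> (\<Sum>n. cmod (\<phi> (fst (u n)) (snd (u n))))"
    by (rule summable_norm[OF s1])
  also have "\<dots> \<le> (\<Sum>n. K * (norm (fst (u n)) * norm (snd (u n))))"
    by (rule suminf_le[OF _ s1 s]) (simp add: assms(3))
  also have "\<dots> = K * (\<Sum>n. norm (fst (u n)) * norm (snd (u n)))"
    by (rule suminf_mult[OF assms(4)[unfolded trep_def]])
  finally show ?thesis .
qed

lemma key_bound:
  fixes v w :: "nat \<Rightarrow> 'c::cbanach_algebra \<times> 'c"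
  assumes v: "trep v" and w: "trep w"
  shows "norm (tomega v - tomega w) \<le> 2 * projnorm (tdiff (tau v) (tau w))"
proof -
  obtain g where gf: "c_functional g" and gl: "bounded_linear g" and gb: "\<And>x. cmod (g x) \<le> 2 * norm x"
    and gy: "Re (g (tomega v - tomega w)) = norm (tomega v - tomega w)"
    using complex_functional_exists[of "tomega v - tomega w"] by blast
  define \<phi> where "\<phi> = (\<lambda>a b. g (a * b))"
  have ga: "\<And>x y. g (x + y) = g x + g y" and gs: "\<And>c x. g (cscale c x) = c * g x"
    using gf unfolding c_functional_def by auto
  have bb: "bbil \<phi>"
    unfolding bbil_def c_functional_def \<phi>_def
  proof (intro conjI allI exI[of _ 2])
    fix x y show "cmod (g (x * y)) \<le> 2 * norm x * norm y"
      using gb[of "x*y"] norm_mult_ineq[of x y] by (simp add: mult.assoc)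
  qed (auto simp: distrib_left distrib_right ga gs mult_cscale_left mult_cscale_right)
  have tg: "tau u \<phi> = g (tomega u)" if "trep u" for u
    using bb bounded_linear.suminf[OF gl trep_prod_summable(2)[OF that]]
    by (simp add: tau_def \<phi>_def tomega_def)
  let ?S = "{(\<Sum>n. norm (fst (u n)) * norm (snd (u n))) | u. trep u \<and> tau u = tdiff (tau v) (tau w)}"
  have ne: "?S \<noteq> {}" using tdiff_exists[OF v w] by blast
  have "norm (tomega v - tomega w) / 2 \<le> s" if sS: "s \<in> ?S" for s
  proof -
    obtain z where z: "trep z" "tau z = tdiff (tau v) (tau w)" "s = (\<Sum>n. norm (fst (z n)) * norm (snd (z n)))"
      using sS by blast
    have "g (tomega z) = g (tomega v) - g (tomega w)"
      using fun_cong[OF z(2), of \<phi>] tg[OF z(1)] tg[OF v] tg[OF w] by (simp add: tdiff_def)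
    also have "\<dots> = g (tomega v - tomega w)" using add_hom_diff[of g "tomega v" "tomega w"] ga by simp
    finally have e: "g (tomega z) = g (tomega v - tomega w)" .
    have "norm (tomega v - tomega w) \<le> cmod (g (tomega v - tomega w))"
      using gy complex_Re_le_cmod by metis
    also have "\<dots> \<le> 2 * norm (tomega z)" using gb e by metis
    also have "\<dots> \<le> 2 * s" using trep_prod_summable(3)[OF z(1)] z(3) by simp
    finally show ?thesis by simp
  qed
  then have "norm (tomega v - tomega w) / 2 \<le> Inf ?S" by (intro cInf_greatest[OF ne]) blast
  then show ?thesis by (simp add: projnorm_def)
qed

lemma trep_tlmul:
  assumes "trep u" shows "trep (tlmul c u)"
  unfolding trep_def tlmul_def fst_conv snd_conv
proof (rule summable_comparison_test'[OF summable_mult[OF assms[unfolded trep_def], of "norm c"]])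
  fix n
  have "norm (c * fst (u n)) * norm (snd (u n)) \<le> (norm c * norm (fst (u n))) * norm (snd (u n))"
    by (intro mult_right_mono norm_mult_ineq) auto
  then show "norm (norm (c * fst (u n)) * norm (snd (u n))) \<le> norm c * (norm (fst (u n)) * norm (snd (u n)))"
    by (simp add: mult.assoc)
qed

lemma trep_trmul:
  assumes "trep u" shows "trep (trmul u c)"
  unfolding trep_def trmul_def fst_conv snd_conv
proof (rule summable_comparison_test'[OF summable_mult[OF assms[unfolded trep_def], of "norm c"]])
  fix n
  have "norm (fst (u n)) * norm (snd (u n) * c) \<le> norm (fst (u n)) * (norm (snd (u n)) * norm c)"
    by (intro mult_left_mono norm_mult_ineq) auto
  then show "norm (norm (fst (u n)) * norm (snd (u n) * c)) \<le> norm c * (norm (fst (u n)) * norm (snd (u n)))"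
    by (simp add: ac_simps)
qed

lemma tomega_tlmul: "trep u \<Longrightarrow> tomega (tlmul c u) = c * tomega u"
  unfolding tomega_def tlmul_def fst_conv snd_conv
  by (simp add: mult.assoc suminf_mult[OF trep_prod_summable(2)])

lemma tomega_trmul: "trep u \<Longrightarrow> tomega (trmul u c) = tomega u * c"
  unfolding tomega_def trmul_def fst_conv snd_conv
  by (simp add: mult.assoc[symmetric] suminf_mult2[OF trep_prod_summable(2)])

definition Z0 :: "'c::cbanach_algebra tensor" where "Z0 = (\<lambda>\<phi>. 0)"

lemma tau_tsingle: "tau (tsingle x y) = (\<lambda>\<phi>. if bbil \<phi> then \<phi> x y else 0)"
proof
  fix \<phi> :: "'a \<Rightarrow> 'a \<Rightarrow> complex"
  show "tau (tsingle x y) \<phi> = (if bbil \<phi> then \<phi> x y else 0)"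
  proof (cases "bbil \<phi>")
    case True
    have e: "(\<lambda>n. \<phi> (fst (tsingle x y n)) (snd (tsingle x y n))) = (\<lambda>n. if n = 0 then \<phi> x y else 0)"
      by (auto simp: tsingle_def fun_eq_iff bbil_zero1[OF True])
    have "(\<lambda>n. if n = 0 then \<phi> x y else 0) sums \<phi> x y" using sums_single[of 0 "\<lambda>_. \<phi> x y"] by simp
    then show ?thesis using True e by (simp add: tau_def sums_iff)
  qed (simp add: tau_def)
qed

lemma Z0_tensor: "(Z0::'c::cbanach_algebra tensor) \<in> tensor_set"
proof -
  have "trep (\<lambda>n. (0::'c, 0::'c))" by (simp add: trep_def)
  moreover have "tau (\<lambda>n. (0::'c, 0::'c)) = Z0"
    by (auto simp: tau_def Z0_def fun_eq_iff bbil_zero1)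
  ultimately show ?thesis unfolding tensor_set_def by (auto intro!: exI[of _ "\<lambda>n. (0::'c, 0::'c)"])
qed

lemma projnorm_small_zero:
  fixes t :: "'c::cbanach_algebra tensor"
  assumes "t \<in> tensor_set" "\<And>\<epsilon>. \<epsilon> > 0 \<Longrightarrow> projnorm t < \<epsilon>"
  shows "t = Z0"
proof
  fix \<phi>
  obtain u0 where u0: "trep u0" "t = tau u0" using assms(1) unfolding tensor_set_def by blast
  show "t \<phi> = Z0 \<phi>"
  proof (cases "bbil \<phi>")
    case False then show ?thesis using u0 by (simp add: tau_def Z0_def)
  next
    case True
    obtain K where K: "K \<ge> 0" "\<And>x y. cmod (\<phi> x y) \<le> K * (norm x * norm y)" using bbil_K[OF True] by blast
    have b: "cmod (t \<phi>) \<le> K * \<epsilon>" if "\<epsilon> > 0" for \<epsilon>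
    proof -
      let ?S = "{(\<Sum>n. norm (fst (u n)) * norm (snd (u n))) | u. trep u \<and> tau u = t}"
      have "(\<Sum>n. norm (fst (u0 n)) * norm (snd (u0 n))) \<in> ?S" using u0 by auto
      then have ne: "?S \<noteq> {}" by blast
      have lt: "Inf ?S < \<epsilon>" using assms(2)[OF that] unfolding projnorm_def .
      obtain s where "s \<in> ?S" "s < \<epsilon>" using cInf_lessD[OF ne lt] by blast
      then obtain z where z: "trep z" "tau z = t" "s = (\<Sum>n. norm (fst (z n)) * norm (snd (z n)))" by blast
      have "cmod (tau z \<phi>) \<le> K * (\<Sum>n. norm (fst (z n)) * norm (snd (z n)))"
        by (rule bbil_tau_bound[OF True K z(1)])
      then have "cmod (t \<phi>) \<le> K * s" unfolding z(2) z(3)[symmetric] .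
      also have "\<dots> \<le> K * \<epsilon>" using \<open>s < \<epsilon>\<close> K(1) by (intro mult_left_mono) auto
      finally show ?thesis .
    qed
    have "cmod (t \<phi>) \<le> 0 + e" if "e > 0" for e
    proof -
      have "e / (K + 1) > 0" using K(1) that by simp
      then have "cmod (t \<phi>) \<le> K * (e / (K + 1))" by (rule b)
      also have "\<dots> \<le> (K + 1) * (e / (K + 1))" using K(1) that by (intro mult_right_mono) auto
      also have "\<dots> = e" using K(1) by simp
      finally show ?thesis by simp
    qed
    then have "cmod (t \<phi>) \<le> 0" by (rule field_le_epsilon)
    then show ?thesis by (simp add: Z0_def)
  qed
qed

lemma closed_tsubspace_Z0: "closed_tsubspace {Z0 :: 'c::cbanach_algebra tensor}"
  unfolding closed_tsubspace_def
proof (intro conjI ballI allI impI)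
  show "{Z0::'c tensor} \<subseteq> tensor_set" using Z0_tensor by blast
  show "(\<lambda>\<phi>. 0) \<in> {Z0::'c tensor}" by (simp add: Z0_def)
next
  fix x y :: "'c tensor" assume "x \<in> {Z0}" "y \<in> {Z0}"
  then show "(\<lambda>\<phi>. x \<phi> + y \<phi>) \<in> {Z0}" by (simp add: Z0_def)
next
  fix c and x :: "'c tensor" assume "x \<in> {Z0}"
  then show "(\<lambda>\<phi>. c * x \<phi>) \<in> {Z0}" by (simp add: Z0_def)
next
  fix t :: "'c tensor" assume t: "t \<in> tensor_set" and h: "\<forall>\<epsilon>>0. \<exists>m\<in>{Z0}. projnorm (tdiff t m) < \<epsilon>"
  have "tdiff t Z0 = t" by (simp add: tdiff_def Z0_def)
  then have "\<And>\<epsilon>. \<epsilon> > 0 \<Longrightarrow> projnorm t < \<epsilon>" using h by auto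
  then show "t \<in> {Z0}" using projnorm_small_zero[OF t] by blast
qed

lemma closed_tspan_Z0: "closed_tspan {Z0 :: 'c::cbanach_algebra tensor} = {Z0}"
  unfolding closed_tspan_def using closed_tsubspace_Z0 by blast

lemma tqnorm_Z0: "tqnorm {Z0} t = projnorm t"
proof -
  have "tdiff t Z0 = t" by (simp add: tdiff_def Z0_def)
  then have "{projnorm (tdiff t s) | s. s \<in> {Z0}} = {projnorm t}" by auto
  then show ?thesis by (simp add: tqnorm_def)
qed

lemma norm_tendsto_iff: "((\<lambda>u. norm (g u - x)) \<longlongrightarrow> 0) F \<longleftrightarrow> (g \<longlongrightarrow> x) F"
  for g :: "'a \<Rightarrow> 'b::real_normed_vector"
  by (simp add: tendsto_norm_zero_iff LIM_zero_iff)


theorem lemma3p12: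
  fixes la :: "'m::cbanach_algebra \<Rightarrow> 'a::cbanach_algebra \<Rightarrow> 'a"
    and ra :: "'a \<Rightarrow> 'm \<Rightarrow> 'a"
    and q :: "'a \<Rightarrow> 'c::cbanach_algebra"
    and laC :: "'m \<Rightarrow> 'c \<Rightarrow> 'c"
    and raC :: "'c \<Rightarrow> 'm \<Rightarrow> 'c"
  assumes "banach_module la ra"
    and "compatible_actions la ra"
    and "acts_trivially_left la"
    and "quotient_by (module_ideal la ra) q"
    and "\<forall>\<alpha> a. laC \<alpha> (q a) = q (la \<alpha> a)"
    and "\<forall>a \<alpha>. raC (q a) \<alpha> = q (ra a \<alpha>)"
    and "has_right_bai TYPE('c)"
  shows "module_pseudo_amenable laC raC \<longleftrightarrow> pseudo_amenable TYPE('c)"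
proof -
  obtain f where fla: "\<And>\<alpha> a. la \<alpha> a = cscale (f \<alpha>) a"
    using assms(3) unfolding acts_trivially_left_def by blast
  have ql: "c_linear q" and qm: "\<And>a b. q (a*b) = q a * q b" and qs: "surj q"
    and qn: "\<And>a. norm (q a) = infdist a (module_ideal la ra)"
    using assms(4) unfolding quotient_by_def by auto
  have qadd: "\<forall>x y. q (x+y) = q x + q y" and qsc: "\<And>c x. q (cscale c x) = cscale c (q x)"
    using ql unfolding c_linear_def by auto
  have laq: "\<And>\<alpha> a. laC \<alpha> (q a) = q (la \<alpha> a)" and raq: "\<And>a \<alpha>. raC (q a) \<alpha> = q (ra a \<alpha>)"
    using assms(5,6) by auto
  have J: "ra a \<alpha> * b - a * la \<alpha> b \<in> module_ideal la ra" for a b \<alpha>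
    unfolding module_ideal_def gen_closed_ideal_def by blast
  have qJ: "q (ra a \<alpha> * b) = q (a * la \<alpha> b)" for a b \<alpha>
  proof -
    have "norm (q (ra a \<alpha> * b - a * la \<alpha> b)) = 0" using qn J by simp
    then show ?thesis using add_hom_diff[OF qadd] by simp
  qed
  have laC: "laC \<alpha> c = cscale (f \<alpha>) c" for \<alpha> c
  proof -
    obtain a where "c = q a" using qs by (metis surj_def)
    then show ?thesis by (simp add: laq fla qsc)
  qed
  have raC_mul: "raC c \<alpha> * e = cscale (f \<alpha>) (c * e)" for c \<alpha> e
  proof -
    obtain a where a: "c = q a" using qs by (metis surj_def)
    obtain b where b: "e = q b" using qs by (metis surj_def)
    have "raC c \<alpha> * e = q (ra a \<alpha> * b)" by (simp add: a b raq qm)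
    also have "\<dots> = q (a * la \<alpha> b)" by (rule qJ)
    also have "\<dots> = cscale (f \<alpha>) (c * e)" by (simp add: a b fla mult_cscale_right qsc qm)
    finally show ?thesis .
  qed
  obtain F :: "'c filter" where F: "F \<noteq> bot" "\<And>x. ((\<lambda>e. x * e) \<longlongrightarrow> x) F"
    using assms(7) unfolding has_right_bai_def by blast
  have raC: "raC c \<alpha> = cscale (f \<alpha>) c" for c \<alpha>
  proof -
    have 1: "((\<lambda>e. raC c \<alpha> * e) \<longlongrightarrow> raC c \<alpha>) F" by (rule F(2))
    have "((\<lambda>e. cscale (f \<alpha>) (c * e)) \<longlongrightarrow> cscale (f \<alpha>) c) F"
      by (rule bounded_linear.tendsto[OF bounded_linear_cscale F(2)])
    then have 2: "((\<lambda>e. raC c \<alpha> * e) \<longlongrightarrow> cscale (f \<alpha>) c) F" by (simp add: raC_mul)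
    show ?thesis using tendsto_unique[OF F(1) 1 2] .
  qed
  have JC: "module_ideal laC raC = {0}"
  proof -
    have gens: "{raC a \<alpha> * b - a * laC \<alpha> b | a b \<alpha>. True} = {0}"
      by (auto simp: raC laC mult_cscale_left mult_cscale_right)
    have ci: "closed_ideal {0::'c}"
      unfolding closed_ideal_def by auto
    show ?thesis unfolding module_ideal_def gen_closed_ideal_def gens using ci by blast
  qed
  have IC: "closed_tspan {tdiff (tau (tsingle (raC c \<alpha>) d)) (tau (tsingle c (laC \<alpha> d))) | c d \<alpha>. True} = {Z0}"
  proof -
    have "tdiff (tau (tsingle (raC c \<alpha>) d)) (tau (tsingle c (laC \<alpha> d))) = Z0" for c d \<alpha>
      by (auto simp: fun_eq_iff tdiff_def tau_tsingle raC laC Z0_def bbil_sc1 bbil_sc2)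
    then have "{tdiff (tau (tsingle (raC c \<alpha>) d)) (tau (tsingle c (laC \<alpha> d))) | c d \<alpha>. True} = {Z0}"
      by auto
    then show ?thesis using closed_tspan_Z0 by simp
  qed
  have inf0: "infdist x (module_ideal laC raC) = norm x" for x by (simp add: JC)
  show ?thesis
    unfolding module_pseudo_amenable_def Let_def inf0 IC tqnorm_Z0 pseudo_amenable_def norm_tendsto_iff
  proof
    assume "\<exists>F :: (nat \<Rightarrow> 'c \<times> 'c) filter. F \<noteq> bot \<and> (\<forall>\<^sub>F u in F. trep u) \<and>
          (\<forall>x. ((\<lambda>u. tomega u * x) \<longlongrightarrow> x) F) \<and> (\<forall>x. ((\<lambda>u. x * tomega u) \<longlongrightarrow> x) F) \<and>
          (\<forall>c. ((\<lambda>u. projnorm (tdiff (tau (tlmul c u)) (tau (trmul u c)))) \<longlongrightarrow> 0) F)"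
    then show "\<exists>F :: (nat \<Rightarrow> 'c \<times> 'c) filter. F \<noteq> bot \<and> (\<forall>\<^sub>F u in F. trep u) \<and>
        (\<forall>c. ((\<lambda>u. projnorm (tdiff (tau (tlmul c u)) (tau (trmul u c)))) \<longlongrightarrow> 0) F) \<and>
        (\<forall>c. ((\<lambda>u. tomega u * c) \<longlongrightarrow> c) F)" by blast
  next
    assume "\<exists>F :: (nat \<Rightarrow> 'c \<times> 'c) filter. F \<noteq> bot \<and> (\<forall>\<^sub>F u in F. trep u) \<and>
        (\<forall>c. ((\<lambda>u. projnorm (tdiff (tau (tlmul c u)) (tau (trmul u c)))) \<longlongrightarrow> 0) F) \<and>
        (\<forall>c. ((\<lambda>u. tomega u * c) \<longlongrightarrow> c) F)"
    then obtain G :: "(nat \<Rightarrow> 'c \<times> 'c) filter" where G: "G \<noteq> bot" "\<forall>\<^sub>F u in G. trep u"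
      "\<And>c. ((\<lambda>u. projnorm (tdiff (tau (tlmul c u)) (tau (trmul u c)))) \<longlongrightarrow> 0) G"
      "\<And>c. ((\<lambda>u. tomega u * c) \<longlongrightarrow> c) G" by blast
    have R: "((\<lambda>u. x * tomega u) \<longlongrightarrow> x) G" for x :: 'c
    proof -
      have ev: "\<forall>\<^sub>F u in G. norm (x * tomega u - tomega u * x) \<le> 2 * projnorm (tdiff (tau (tlmul x u)) (tau (trmul u x)))"
        using G(2)
      proof (rule eventually_mono)
        fix u :: "nat \<Rightarrow> 'c \<times> 'c" assume u: "trep u"
        show "norm (x * tomega u - tomega u * x) \<le> 2 * projnorm (tdiff (tau (tlmul x u)) (tau (trmul u x)))"
          using key_bound[OF trep_tlmul[OF u] trep_trmul[OF u]] tomega_tlmul[OF u] tomega_trmul[OF u] by simp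
      qed
      have "((\<lambda>u. 2 * projnorm (tdiff (tau (tlmul x u)) (tau (trmul u x)))) \<longlongrightarrow> 2 * 0) G"
        by (intro tendsto_mult tendsto_const G(3))
      then have "((\<lambda>u. norm (x * tomega u - tomega u * x)) \<longlongrightarrow> 0) G"
        by (intro tendsto_sandwich[OF _ ev tendsto_const]) auto
      then have d: "((\<lambda>u. x * tomega u - tomega u * x) \<longlongrightarrow> 0) G" by (simp add: tendsto_norm_zero_iff)
      have "((\<lambda>u. (x * tomega u - tomega u * x) + tomega u * x) \<longlongrightarrow> 0 + x) G"
        by (intro tendsto_add d G(4))
      then show ?thesis by simp
    qed
    show "\<exists>F :: (nat \<Rightarrow> 'c \<times> 'c) filter. F \<noteq> bot \<and> (\<forall>\<^sub>F u in F. trep u) \<and>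
          (\<forall>x. ((\<lambda>u. tomega u * x) \<longlongrightarrow> x) F) \<and> (\<forall>x. ((\<lambda>u. x * tomega u) \<longlongrightarrow> x) F) \<and>
          (\<forall>c. ((\<lambda>u. projnorm (tdiff (tau (tlmul c u)) (tau (trmul u c)))) \<longlongrightarrow> 0) F)"
      using G R by blast
  qed
qed


end
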